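(* Let $I$ be a monomial ideal of $R=K[x_1,\ldots,x_d]$ ($K$ a field) and $r\in\mathbb{R}$, $r\ge 0$. Consider the following procedure (the Staircase algorithm). If $d=1$, output $\{x_1^{\min(\mathcal{V},1)}\}$. If $d\ge2$, initialize an empty output list and let StartPoints be the set of lattice points $\mathbf{a}\in\operatorname{hype}(I,r)\cap\mathbb{Z}^d$ with $a_{d-1}=\min(\mathcal{V},d-1)$ and $a_d=\max(\mathcal{V},d)$. For each $\mathbf{a}\in$ StartPoints: set $\mathbf{b}:=\mathbf{a}$; while $\mathbf{a}\in\operatorname{hype}(I,r)$, do the following: if $\mathbf{a}\in r\cdot NP(I)$, set $\mathbf{b}:=\mathbf{a}$ and then $\mathbf{a}:=\mathbf{a}-\mathbf{e}_d$; otherwise, if $\mathbf{b}\in r\cdot NP(I)$ append $\mathbf{x}^{\mathbf{b}}$ to the output, then set $\mathbf{b}:=\mathbf{a}$ and $\mathbf{a}:=\mathbf{a}+\mathbf{e}_{d-1}$. After the while loop ends, if $\mathbf{b}\in r\cdot NP(I)$ append $\mathbf{x}^{\mathbf{b}}$ to the output. Finally return the output list. If $d\in\{1,2\}$, this procedure returns a minimal set of monomial generators of $\overline{I^r}$. If $d\ge3$, it returns a (not necessarily minimal) set of monomial generators of $\overline{I^r}$.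
   Context: $\mathbb{N}$ denotes the non-negative integers, $\mathbf{x}^{\mathbf{a}}=x_1^{a_1}\cdots x_d^{a_d}$, and $\mathbf{e}_i$ is the $i$-th standard basis vector. $G(I)$ is the minimal monomial generating set of $I$. $NP(I)$ is the convex hull in $\mathbb{R}^d$ of $\{\mathbf{a}\in\mathbb{N}^d\mid \mathbf{x}^{\mathbf{a}}\in I\}$, and $r\cdot NP(I)=\{r\mathbf{v}\mid\mathbf{v}\in NP(I)\}$. For real $r\ge0$, $\overline{I^r}=(\{\mathbf{x}^{\mathbf{a}}\mid \mathbf{a}\in r\cdot NP(I)\cap\mathbb{N}^d\})$. Let $\mathcal{V}(I,r)=\{(\lceil ra_1\rceil,\ldots,\lceil ra_d\rceil)\mid \mathbf{x}^{\mathbf{a}}\in G(I)\}$, and for $1\le i\le d$ let $\min(\mathcal{V},i)=\min_{\alpha\in\mathcal{V}(I,r)}\alpha_i$, $\max(\mathcal{V},i)=\max_{\alpha\in\mathcal{V}(I,r)}\alpha_i$. The hyperrectangle is $\operatorname{hype}(I,r)=\prod_{i=1}^d[\min(\mathcal{V},i),\max(\mathcal{V},i)]$. *)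

theory Defs
  imports Complex_Main
begin

text \<open>Exponent vectors are functions on indices 0..d-1 (index i stands for the
variable x_(i+1)), required to vanish outside {0..<d}.  A monomial ideal of
K[x_1,...,x_d] is encoded by the set E of exponent vectors of the monomials it
contains (an up-closed subset of N^d); the field K plays no role.\<close>

definition supp_in :: "nat \<Rightarrow> (nat \<Rightarrow> 'a::zero) \<Rightarrow> bool" where
  "supp_in d a \<longleftrightarrow> (\<forall>i\<ge>d. a i = 0)"

definition monomial_ideal_exps :: "nat \<Rightarrow> (nat \<Rightarrow> nat) set \<Rightarrow> bool" where
  "monomial_ideal_exps d E \<longleftrightarrow>
     (\<forall>a\<in>E. supp_in d a) \<and>
     (\<forall>a\<in>E. \<forall>c. supp_in d c \<and> (\<forall>i. a i \<le> c i) \<longrightarrow> c \<in> E)"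

definition min_gens :: "(nat \<Rightarrow> nat) set \<Rightarrow> (nat \<Rightarrow> nat) set" where
  "min_gens E = {a \<in> E. \<forall>b\<in>E. (\<forall>i. b i \<le> a i) \<longrightarrow> b = a}"

definition newton_polyhedron :: "(nat \<Rightarrow> nat) set \<Rightarrow> (nat \<Rightarrow> real) set" where
  "newton_polyhedron E = {v. \<exists>S u. finite S \<and> S \<noteq> {} \<and> S \<subseteq> E \<and> (\<forall>a\<in>S. 0 \<le> u a)
       \<and> sum u S = 1 \<and> v = (\<lambda>i. \<Sum>a\<in>S. u a * real (a i))}"

definition scaled_NP :: "real \<Rightarrow> (nat \<Rightarrow> nat) set \<Rightarrow> (nat \<Rightarrow> real) set" where
  "scaled_NP r E = (\<lambda>v i. r * v i) ` newton_polyhedron E"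

text \<open>Exponent set of the integral closure ideal of I^r: monomials divisible by some x^a
with a in r*NP(I) \<inter> N^d.\<close>
definition int_closure_exps :: "nat \<Rightarrow> (nat \<Rightarrow> nat) set \<Rightarrow> real \<Rightarrow> (nat \<Rightarrow> nat) set" where
  "int_closure_exps d E r = {c. supp_in d c \<and>
     (\<exists>a. supp_in d a \<and> (\<lambda>i. real (a i)) \<in> scaled_NP r E \<and> (\<forall>i. a i \<le> c i))}"

definition Vset :: "(nat \<Rightarrow> nat) set \<Rightarrow> real \<Rightarrow> (nat \<Rightarrow> int) set" where
  "Vset E r = (\<lambda>a i. \<lceil>r * real (a i)\<rceil>) ` min_gens E"

definition minV :: "(nat \<Rightarrow> nat) set \<Rightarrow> real \<Rightarrow> nat \<Rightarrow> int" where
  "minV E r i = Min ((\<lambda>v. v i) ` Vset E r)"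

definition maxV :: "(nat \<Rightarrow> nat) set \<Rightarrow> real \<Rightarrow> nat \<Rightarrow> int" where
  "maxV E r i = Max ((\<lambda>v. v i) ` Vset E r)"

definition hype :: "nat \<Rightarrow> (nat \<Rightarrow> nat) set \<Rightarrow> real \<Rightarrow> (nat \<Rightarrow> int) set" where
  "hype d E r = {a. supp_in d a \<and> (\<forall>i<d. minV E r i \<le> a i \<and> a i \<le> maxV E r i)}"

definition in_rNP :: "real \<Rightarrow> (nat \<Rightarrow> nat) set \<Rightarrow> (nat \<Rightarrow> int) \<Rightarrow> bool" where
  "in_rNP r E a \<longleftrightarrow> (\<lambda>i. real_of_int (a i)) \<in> scaled_NP r E"

text \<open>Coordinate d-1 is x_d, coordinate d-2 is x_(d-1).  The loop is
guarded by d \<ge> 2 (the only case where it is run) and by box bounds lo/hi.\<close>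
function stair_loop :: "nat \<Rightarrow> (nat \<Rightarrow> int) \<Rightarrow> (nat \<Rightarrow> int) \<Rightarrow> ((nat \<Rightarrow> int) \<Rightarrow> bool)
    \<Rightarrow> (nat \<Rightarrow> int) \<Rightarrow> (nat \<Rightarrow> int) \<Rightarrow> (nat \<Rightarrow> int) list \<Rightarrow> (nat \<Rightarrow> int) list" where
  "stair_loop d lo hi P a b out =
     (if 2 \<le> d \<and> supp_in d a \<and> (\<forall>i<d. lo i \<le> a i \<and> a i \<le> hi i) then
        (if P a then stair_loop d lo hi P (a(d - 1 := a (d - 1) - 1)) a out
         else stair_loop d lo hi P (a(d - 2 := a (d - 2) + 1)) a (if P b then out @ [b] else out))
      else (if P b then out @ [b] else out))"
  by pat_completeness auto
termination
proof (relation "measure (\<lambda>(d, lo, hi, P, a, b, out).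
          nat (a (d - 1) - lo (d - 1) + 1) + nat (hi (d - 2) - a (d - 2) + 1))", goal_cases)
  case 1 then show ?case by simp
next
  case (2 d lo hi P a b out)
  have "d - 1 < d" "d - 2 \<noteq> d - 1" using 2 by auto
  with 2 show ?case by auto
next
  case (3 d lo hi P a b out)
  have "d - 2 < d" "d - 2 \<noteq> d - 1" using 3 by auto
  with 3 show ?case by auto
qed

definition start_points :: "nat \<Rightarrow> (nat \<Rightarrow> nat) set \<Rightarrow> real \<Rightarrow> (nat \<Rightarrow> int) set" where
  "start_points d E r = {a \<in> hype d E r. a (d - 2) = minV E r (d - 2) \<and> a (d - 1) = maxV E r (d - 1)}"

text \<open>The output
list is the concatenation of the loop outputs over all start points; as the theorem only
concerns the set of returned monomials, the iteration order is irrelevant.\<close>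
definition staircase :: "nat \<Rightarrow> (nat \<Rightarrow> nat) set \<Rightarrow> real \<Rightarrow> (nat \<Rightarrow> int) set" where
  "staircase d E r =
     (if d = 1 then {(\<lambda>i. if i = 0 then minV E r 0 else 0)}
      else (\<Union>a\<in>start_points d E r.
              set (stair_loop d (minV E r) (maxV E r) (in_rNP r E) a a [])))"

end

theory Submission
  imports Defs
begin

lemma NP_intro:
  fixes J :: "'b set" and f :: "'b \<Rightarrow> nat \<Rightarrow> nat"
  assumes "finite J" "J \<noteq> {}" "f ` J \<subseteq> E" "\<forall>j\<in>J. 0 \<le> w j" "sum w J = 1"
  shows "(\<lambda>i. \<Sum>j\<in>J. w j * real (f j i)) \<in> newton_polyhedron E"
proof -
  define u where "u a = sum w {j\<in>J. f j = a}" for a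
  have s1: "sum u (f ` J) = 1"
    using assms(5) sum.image_gen[OF assms(1), of w f] by (simp add: u_def)
  have s2: "(\<Sum>j\<in>J. w j * real (f j i)) = (\<Sum>a\<in>f ` J. u a * real (a i))" for i
  proof -
    have "(\<Sum>j\<in>J. w j * real (f j i)) = (\<Sum>a\<in>f ` J. \<Sum>j\<in>{j\<in>J. f j = a}. w j * real (f j i))"
      using sum.image_gen[OF assms(1), of "\<lambda>j. w j * real (f j i)" f] by simp
    also have "\<dots> = (\<Sum>a\<in>f ` J. \<Sum>j\<in>{j\<in>J. f j = a}. w j * real (a i))"
      by (intro sum.cong) auto
    also have "\<dots> = (\<Sum>a\<in>f ` J. u a * real (a i))"
      by (simp add: u_def sum_distrib_right)
    finally show ?thesis .
  qed
  show ?thesis unfolding newton_polyhedron_def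
    apply (rule CollectI, rule exI[of _ "f ` J"], rule exI[of _ u])
    using assms s1 s2 by (auto simp: u_def intro!: sum_nonneg)
qed

lemma NP_supp:
  assumes "monomial_ideal_exps d E" "v \<in> newton_polyhedron E"
  shows "supp_in d v"
proof -
  obtain S u where S: "S \<subseteq> E" and v: "v = (\<lambda>i. \<Sum>a\<in>S. u a * real (a i))"
    using assms(2) unfolding newton_polyhedron_def by blast
  have "\<forall>a\<in>S. \<forall>i\<ge>d. a i = 0" using S assms(1) unfolding monomial_ideal_exps_def supp_in_def by blast
  then show ?thesis unfolding supp_in_def v by (auto intro!: sum.neutral)
qed

lemma NP_shift1:
  assumes M: "monomial_ideal_exps d E" and x: "x \<in> newton_polyhedron E" and i: "i < d" and t: "t \<ge> 0"
  shows "x(i := x i + t) \<in> newton_polyhedron E"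
proof -
  obtain S u where S: "finite S" "S \<noteq> {}" "S \<subseteq> E" "\<forall>a\<in>S. 0 \<le> u a" "sum u S = 1"
    and xd: "x = (\<lambda>i. \<Sum>a\<in>S. u a * real (a i))"
    using x unfolding newton_polyhedron_def by blast
  define K :: nat where "K = nat \<lceil>t\<rceil> + 1"
  have Kt: "t < real K" unfolding K_def by linarith
  have K1: "real K \<ge> 1" unfolding K_def by simp
  define l where "l = t / real K"
  have l0: "0 \<le> l" "l \<le> 1" using Kt K1 t by (auto simp: l_def)
  define J where "J = S \<times> (UNIV :: bool set)"
  define f where "f = (\<lambda>(a::nat\<Rightarrow>nat, b::bool). if b then a(i := a i + K) else a)"
  define w where "w = (\<lambda>(a::nat\<Rightarrow>nat, b::bool). if b then u a * l else u a * (1 - l))"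
  have fJ: "f ` J \<subseteq> E"
  proof
    fix y assume "y \<in> f ` J"
    then obtain a b where ab: "a \<in> S" "y = f (a, b)" by (auto simp: J_def)
    have aE: "a \<in> E" using ab S by auto
    show "y \<in> E"
    proof (cases b)
      case True
      have "supp_in d (a(i := a i + K))" using M aE i unfolding monomial_ideal_exps_def supp_in_def by auto
      moreover have "\<forall>j. a j \<le> (a(i := a i + K)) j" by simp
      ultimately have "a(i := a i + K) \<in> E" using M aE unfolding monomial_ideal_exps_def by blast
      then show ?thesis using ab True by (simp add: f_def)
    next
      case False then show ?thesis using ab aE by (simp add: f_def)
    qed
  qed
  have sumJ: "sum g J = (\<Sum>a\<in>S. g (a, True) + g (a, False))" for g :: "(nat\<Rightarrow>nat) \<times> bool \<Rightarrow> real"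
    unfolding J_def sum.cartesian_product' by (simp add: UNIV_bool add.commute)
  have w1: "sum w J = 1"
  proof -
    have "sum w J = (\<Sum>a\<in>S. u a)" unfolding sumJ w_def by (simp add: algebra_simps)
    then show ?thesis using S(5) by simp
  qed
  have wnn: "\<forall>j\<in>J. 0 \<le> w j" using S(4) l0 by (auto simp: J_def w_def)
  have "(\<lambda>j. \<Sum>p\<in>J. w p * real (f p j)) = x(i := x i + t)"
  proof
    fix j
    have "(\<Sum>p\<in>J. w p * real (f p j)) = (\<Sum>a\<in>S. u a * real (a j) + (if j = i then u a * l * real K else 0))"
      unfolding sumJ by (intro sum.cong) (auto simp: w_def f_def algebra_simps)
    also have "\<dots> = x j + (if j = i then l * real K else 0)"
      using S(5) by (cases "j = i") (simp_all add: xd sum.distrib sum_distrib_right[symmetric])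
    also have "\<dots> = (x(i := x i + t)) j" using K1 by (auto simp: l_def)
    finally show "(\<Sum>p\<in>J. w p * real (f p j)) = (x(i := x i + t)) j" .
  qed
  moreover have "(\<lambda>j. \<Sum>p\<in>J. w p * real (f p j)) \<in> newton_polyhedron E"
    by (rule NP_intro) (use S fJ w1 wnn in \<open>auto simp: J_def\<close>)
  ultimately show ?thesis by simp
qed



lemma NP_up:
  assumes M: "monomial_ideal_exps d E" and x: "x \<in> newton_polyhedron E"
    and le: "\<forall>i. x i \<le> w i" and w: "supp_in d w"
  shows "w \<in> newton_polyhedron E"
proof -
  have xs: "supp_in d x" using NP_supp[OF M x] .
  have step: "n \<le> d \<Longrightarrow> (\<lambda>i. if i < n then w i else x i) \<in> newton_polyhedron E" for n
  proof (induction n)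
    case 0 then show ?case using x by simp
  next
    case (Suc n)
    have n: "n < d" using Suc.prems by simp
    have "(\<lambda>i. if i < Suc n then w i else x i)
        = (\<lambda>i. if i < n then w i else x i)(n := (\<lambda>i. if i < n then w i else x i) n + (w n - x n))"
      by (auto simp: fun_eq_iff)
    moreover have "w n - x n \<ge> 0" using le[rule_format, of n] by simp
    ultimately show ?case using NP_shift1[OF M Suc.IH[OF Suc_leD[OF Suc.prems]] n, of "w n - x n"] by simp
  qed
  have "(\<lambda>i. if i < d then w i else x i) = w"
    using xs w by (auto simp: fun_eq_iff supp_in_def)
  then show ?thesis using step[of d] by simp
qed

lemma sNP_up:
  assumes M: "monomial_ideal_exps d E" and r: "r > 0" and v: "v \<in> scaled_NP r E"
    and le: "\<forall>i. v i \<le> w i" and w: "supp_in d w"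
  shows "w \<in> scaled_NP r E"
proof -
  obtain x where x: "x \<in> newton_polyhedron E" and vx: "v = (\<lambda>i. r * x i)"
    using v unfolding scaled_NP_def by blast
  have x': "(\<lambda>i. w i / r) \<in> newton_polyhedron E"
  proof (rule NP_up[OF M x])
    show "\<forall>i. x i \<le> w i / r" using le r by (simp add: vx pos_le_divide_eq mult.commute)
    show "supp_in d (\<lambda>i. w i / r)" using w by (simp add: supp_in_def)
  qed
  have "w = (\<lambda>v i. r * v i) (\<lambda>i. w i / r)" using r by auto
  from image_eqI[where f="\<lambda>v i. r * v i", OF this x'] show ?thesis unfolding scaled_NP_def .
qed

lemma exists_min_gen:
  assumes M: "monomial_ideal_exps d E" and a: "a \<in> E"
  shows "\<exists>g\<in>min_gens E. \<forall>i. g i \<le> a i"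
proof -
  define m where "m g = (\<Sum>i<d. g i)" for g :: "nat \<Rightarrow> nat"
  obtain g where g: "g \<in> E \<and> (\<forall>i. g i \<le> a i)" and gmin: "\<forall>y. y \<in> E \<and> (\<forall>i. y i \<le> a i) \<longrightarrow> m g \<le> m y"
    using ex_has_least_nat[of "\<lambda>g. g \<in> E \<and> (\<forall>i. g i \<le> a i)" a m] a by auto
  have "g \<in> min_gens E"
    unfolding min_gens_def
  proof (intro CollectI conjI ballI impI)
    show "g \<in> E" using g by simp
    fix b assume b: "b \<in> E" "\<forall>i. b i \<le> g i"
    show "b = g"
    proof (rule ccontr)
      assume "b \<noteq> g"
      then obtain j where j: "b j \<noteq> g j" by auto
      have EE: "\<forall>a\<in>E. supp_in d a" using M unfolding monomial_ideal_exps_def by blast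
      have sb: "supp_in d b" "supp_in d g" using EE b g by auto
      have jd: "j < d" using j sb unfolding supp_in_def by (cases "j < d") auto
      have "m b < m g" unfolding m_def
        by (rule sum_strict_mono_ex1) (use b j jd in \<open>auto intro!: bexI[of _ j] le_neq_implies_less\<close>)
      moreover have "m g \<le> m b" using gmin b g le_trans by blast
      ultimately show False by simp
    qed
  qed
  then show ?thesis using g by blast
qed


lemma del_le:
  fixes a b :: "nat \<Rightarrow> nat"
  assumes "\<forall>j. (if j < i then a j else a (Suc j)) \<le> (if j < i then b j else b (Suc j))"
    and "a i \<le> b i"
  shows "a k \<le> b k"
proof -
  consider "k < i" | "k = i" | "k > i" by linarith
  then show ?thesis
  proof cases
    case 1 then show ?thesis using assms(1)[rule_format, of k] by simp
  next
    case 2 then show ?thesis using assms(2) by simp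
  next
    case 3
    then have "\<not> (k - 1 < i)" "Suc (k - 1) = k" by auto
    then show ?thesis using assms(1)[rule_format, of "k - 1"] by simp
  qed
qed

lemma antichain_finite:
  "(\<forall>a\<in>A. supp_in d a) \<Longrightarrow> (\<forall>a\<in>A. \<forall>b\<in>A. (\<forall>i. a i \<le> b i) \<longrightarrow> a = b) \<Longrightarrow> finite (A :: (nat \<Rightarrow> nat) set)"
proof (induction d arbitrary: A)
  case 0
  then have "A \<subseteq> {\<lambda>_. 0}" by (auto simp: supp_in_def fun_eq_iff)
  then show ?case using finite_subset by blast
next
  case (Suc d)
  show ?case
  proof (cases "A = {}")
    case True then show ?thesis by simp
  next
    case False
    then obtain a0 where a0: "a0 \<in> A" by blast
    define del where "del i a = (\<lambda>j. if j < i then a j else a (Suc j))" for i :: nat and a :: "nat \<Rightarrow> nat"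
    have fin: "finite {a\<in>A. a i = v}" if i: "i < Suc d" for i v
    proof -
      let ?B = "{a\<in>A. a i = v}"
      have le: "a k \<le> b k" if "a \<in> ?B" "b \<in> ?B" "\<forall>j. del i a j \<le> del i b j" for a b k
        using del_le[of i a b k] that by (simp add: del_def)
      have "finite (del i ` ?B)"
      proof (rule Suc.IH)
        show "\<forall>a\<in>del i ` ?B. supp_in d a"
        proof
          fix x assume "x \<in> del i ` ?B"
          then obtain a where a: "a \<in> A" "x = del i a" by blast
          then have "\<forall>j\<ge>Suc d. a j = 0" using Suc.prems(1) unfolding supp_in_def by blast
          then show "supp_in d x" using i a(2) unfolding supp_in_def del_def by auto
        qed
        show "\<forall>a\<in>del i ` ?B. \<forall>b\<in>del i ` ?B. (\<forall>j. a j \<le> b j) \<longrightarrow> a = b"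
        proof (intro ballI impI)
          fix x y assume x: "x \<in> del i ` ?B" and y: "y \<in> del i ` ?B" and xy: "\<forall>j. x j \<le> y j"
          obtain a b where ab: "a \<in> ?B" "b \<in> ?B" "x = del i a" "y = del i b" using x y by blast
          then have "\<forall>k. a k \<le> b k" using le[OF ab(1,2)] xy ab(3,4) by simp
          then have "a = b" using Suc.prems(2) ab(1,2) by simp
          then show "x = y" using ab by simp
        qed
      qed
      moreover have "inj_on (del i) ?B"
      proof (rule inj_onI)
        fix a b assume ab: "a \<in> ?B" "b \<in> ?B" "del i a = del i b"
        have "a k \<le> b k" "b k \<le> a k" for k using le[of a b k] le[of b a k] ab by auto
        then show "a = b" by (simp add: antisym fun_eq_iff)
      qed
      ultimately show ?thesis using finite_imageD by blast
    qed
    have "A \<subseteq> insert a0 (\<Union>i<Suc d. \<Union>v<a0 i. {a\<in>A. a i = v})"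
    proof
      fix a assume a: "a \<in> A"
      show "a \<in> insert a0 (\<Union>i<Suc d. \<Union>v<a0 i. {a\<in>A. a i = v})"
      proof (cases "a = a0")
        case True then show ?thesis by simp
      next
        case False
        have "(\<forall>i. a0 i \<le> a i) \<longrightarrow> a0 = a" using Suc.prems(2) a a0 by blast
        then have "\<not> (\<forall>i. a0 i \<le> a i)" using False by auto
        then obtain i where i: "a i < a0 i" by (meson not_le)
        have "supp_in (Suc d) a0" using a0 Suc.prems(1) by blast
        then have "i < Suc d" using i unfolding supp_in_def by (cases "i < Suc d") auto
        then show ?thesis using i a by blast
      qed
    qed
    moreover have "finite (insert a0 (\<Union>i<Suc d. \<Union>v<a0 i. {a\<in>A. a i = v}))"
      using fin by auto
    ultimately show ?thesis using finite_subset by blast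
  qed
qed



declare stair_loop.simps[simp del]

definition inb :: "nat \<Rightarrow> (nat \<Rightarrow> int) \<Rightarrow> (nat \<Rightarrow> int) \<Rightarrow> (nat \<Rightarrow> int) \<Rightarrow> bool" where
  "inb d lo hi a \<longleftrightarrow> supp_in d a \<and> (\<forall>i<d. lo i \<le> a i \<and> a i \<le> hi i)"

lemma loop_eq:
  "stair_loop d lo hi P a b out =
     (if 2 \<le> d \<and> inb d lo hi a then
        (if P a then stair_loop d lo hi P (a(d - 1 := a (d - 1) - 1)) a out
         else stair_loop d lo hi P (a(d - 2 := a (d - 2) + 1)) a (if P b then out @ [b] else out))
      else (if P b then out @ [b] else out))"
  unfolding inb_def by (rule stair_loop.simps)


lemma loop_step1:
  "2 \<le> d \<Longrightarrow> inb d lo hi a \<Longrightarrow> P a \<Longrightarrow>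
   stair_loop d lo hi P a b out = stair_loop d lo hi P (a(d - 1 := a (d - 1) - 1)) a out"
  by (rule trans[OF loop_eq]) simp

lemma loop_step2:
  "2 \<le> d \<Longrightarrow> inb d lo hi a \<Longrightarrow> \<not> P a \<Longrightarrow>
   stair_loop d lo hi P a b out = stair_loop d lo hi P (a(d - 2 := a (d - 2) + 1)) a (if P b then out @ [b] else out)"
  by (rule trans[OF loop_eq]) simp

lemma loop_stop:
  assumes "\<not> (2 \<le> d \<and> inb d lo hi a)"
  shows "stair_loop d lo hi P a b out = (if P b then out @ [b] else out)"
  by (subst loop_eq) (simp only: assms if_False)

lemma loop_mono: "set out \<subseteq> set (stair_loop d lo hi P a b out)"
proof (induction d lo hi P a b out rule: stair_loop.induct)
  case (1 d lo hi P a b out)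
  show ?case
  proof (cases "2 \<le> d \<and> inb d lo hi a")
    case True
    show ?thesis
    proof (cases "P a")
      case Pa: True
      show ?thesis unfolding loop_step1[where P=P and b=b and out=out, OF conjunct1[OF True] conjunct2[OF True] Pa]
        using "1.IH"(1) True Pa unfolding inb_def by blast
    next
      case Pa: False
      have "set out \<subseteq> set (if P b then out @ [b] else out)" by auto
      then show ?thesis unfolding loop_step2[where P=P and b=b and out=out, OF conjunct1[OF True] conjunct2[OF True] Pa]
        using "1.IH"(2) True Pa unfolding inb_def by blast
    qed
  next
    case False
    then show ?thesis unfolding loop_stop[where P=P and b=b and out=out, OF False] by auto
  qed
qed

lemma loop_out:
  "(\<forall>x\<in>set out. P x \<and> inb d lo hi x) \<Longrightarrow> (inb d lo hi b \<or> \<not> P b) \<Longrightarrow>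
   \<forall>x\<in>set (stair_loop d lo hi P a b out). P x \<and> inb d lo hi x"
proof (induction d lo hi P a b out rule: stair_loop.induct)
  case (1 d lo hi P a b out)
  show ?case
  proof (cases "2 \<le> d \<and> inb d lo hi a")
    case True
    show ?thesis
    proof (cases "P a")
      case Pa: True
      show ?thesis unfolding loop_step1[where P=P and b=b and out=out, OF conjunct1[OF True] conjunct2[OF True] Pa]
        by (rule "1.IH"(1)) (use True Pa "1.prems" in \<open>auto simp: inb_def\<close>)
    next
      case Pa: False
      show ?thesis unfolding loop_step2[where P=P and b=b and out=out, OF conjunct1[OF True] conjunct2[OF True] Pa]
        by (rule "1.IH"(2)) (use True Pa "1.prems" in \<open>auto simp: inb_def\<close>)
    qed
  next
    case False
    then show ?thesis unfolding loop_stop[where P=P and b=b and out=out, OF False] using "1.prems" by auto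
  qed
qed

lemma loop_hit:
  assumes d: "2 \<le> d" and Pc: "P c"
    and minc: "\<forall>c'. inb d lo hi c' \<longrightarrow> P c' \<longrightarrow> (\<forall>i. c' i \<le> c i) \<longrightarrow> c' = c"
  shows "c \<in> set (stair_loop d lo hi P (c(d - 1 := c (d - 1) - 1)) c out)"
proof (cases "inb d lo hi (c(d - 1 := c (d - 1) - 1))")
  case True
  have "\<not> P (c(d - 1 := c (d - 1) - 1))"
  proof
    assume "P (c(d - 1 := c (d - 1) - 1))"
    then have "c(d - 1 := c (d - 1) - 1) = c" using minc True by auto
    then have "c (d - 1) - 1 = c (d - 1)" by (metis fun_upd_same)
    then show False by simp
  qed
  then have "stair_loop d lo hi P (c(d - 1 := c (d - 1) - 1)) c out
      = stair_loop d lo hi P ((c(d - 1 := c (d - 1) - 1))(d - 2 := (c(d - 1 := c (d - 1) - 1)) (d - 2) + 1)) (c(d - 1 := c (d - 1) - 1)) (out @ [c])"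
    using loop_step2[where P=P and b=c and out=out, OF d True] Pc by simp
  then show ?thesis using loop_mono[of "out @ [c]"] by auto
next
  case False
  then have nb: "\<not> (2 \<le> d \<and> inb d lo hi (c(d - 1 := c (d - 1) - 1)))" by simp
  show ?thesis unfolding loop_stop[where P=P and b=c and out=out, OF nb] using Pc by simp
qed

lemma loop_reach:
  "2 \<le> d \<Longrightarrow> (\<forall>a c. P a \<longrightarrow> (\<forall>i. a i \<le> c i) \<longrightarrow> inb d lo hi c \<longrightarrow> P c) \<Longrightarrow>
   inb d lo hi c \<Longrightarrow> P c \<Longrightarrow> (\<forall>c'. inb d lo hi c' \<longrightarrow> P c' \<longrightarrow> (\<forall>i. c' i \<le> c i) \<longrightarrow> c' = c) \<Longrightarrow>
   (\<forall>i. i \<noteq> d - 2 \<longrightarrow> i \<noteq> d - 1 \<longrightarrow> a i = c i) \<Longrightarrow>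
   lo (d - 2) \<le> a (d - 2) \<Longrightarrow> a (d - 2) \<le> c (d - 2) \<Longrightarrow> c (d - 1) \<le> a (d - 1) \<Longrightarrow> a (d - 1) \<le> hi (d - 1) \<Longrightarrow>
   c \<in> set (stair_loop d lo hi P a b out)"
proof (induction d lo hi P a b out rule: stair_loop.induct)
  case (1 d lo hi P a b out)
  note pr = "1.prems"
  have dd: "d - 2 \<noteq> d - 1" "d - 1 \<noteq> d - 2" "d - 2 < d" "d - 1 < d" using pr(1) by auto
  have ia: "inb d lo hi a"
    unfolding inb_def
  proof (intro conjI allI impI)
    show "supp_in d a" unfolding supp_in_def
    proof (intro allI impI)
      fix i assume "d \<le> i"
      then have "i \<noteq> d - 2" "i \<noteq> d - 1" "c i = 0" using pr(1,3) by (auto simp: inb_def supp_in_def)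
      then show "a i = 0" using pr(6) by simp
    qed
    fix i assume i: "i < d"
    have ci: "lo i \<le> c i \<and> c i \<le> hi i" using pr(3) i by (simp add: inb_def)
    have "lo i \<le> a i \<and> a i \<le> hi i"
    proof -
      consider "i = d - 2" | "i = d - 1" | "i \<noteq> d - 2" "i \<noteq> d - 1" by blast
      then show ?thesis
      proof cases
        case 1 then show ?thesis using pr(7,8) ci by auto
      next
        case 2 then show ?thesis using pr(9,10) ci by auto
      next
        case 3 then show ?thesis using pr(6) ci by auto
      qed
    qed
    then show "lo i \<le> a i" "a i \<le> hi i" by auto
  qed
  show ?case
  proof (cases "P a")
    case Pa: True
    note st = loop_step1[where P=P and b=b and out=out, OF pr(1) ia Pa]
    show ?thesis
    proof (cases "a = c")
      case True
      have "c \<in> set (stair_loop d lo hi P (c(d - 1 := c (d - 1) - 1)) c out)"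
        by (rule loop_hit[OF pr(1) pr(4) pr(5)])
      then show ?thesis using st True by simp
    next
      case False
      have gt: "c (d - 1) < a (d - 1)"
      proof (rule ccontr)
        assume "\<not> c (d - 1) < a (d - 1)"
        then have "\<forall>i. a i \<le> c i" using pr(6,8,9) by (metis not_less order.refl)
        then show False using pr(5) ia Pa False by blast
      qed
      show ?thesis unfolding st
      proof (rule "1.IH"(1)[OF _ Pa pr(1-5)])
        show "2 \<le> d \<and> supp_in d a \<and> (\<forall>i<d. lo i \<le> a i \<and> a i \<le> hi i)"
          using pr(1) ia by (simp add: inb_def)
        show "\<forall>i. i \<noteq> d - 2 \<longrightarrow> i \<noteq> d - 1 \<longrightarrow> (a(d - 1 := a (d - 1) - 1)) i = c i"
          using pr(6) by simp
        show "lo (d - 2) \<le> (a(d - 1 := a (d - 1) - 1)) (d - 2)" using pr(7) dd by simp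
        show "(a(d - 1 := a (d - 1) - 1)) (d - 2) \<le> c (d - 2)" using pr(8) dd by simp
        show "c (d - 1) \<le> (a(d - 1 := a (d - 1) - 1)) (d - 1)" using gt by simp
        show "(a(d - 1 := a (d - 1) - 1)) (d - 1) \<le> hi (d - 1)" using pr(10) by simp
      qed
    qed
  next
    case Pa: False
    note st = loop_step2[where P=P and b=b and out=out, OF pr(1) ia Pa]
    have lt: "a (d - 2) < c (d - 2)"
    proof (rule ccontr)
      assume "\<not> a (d - 2) < c (d - 2)"
      then have "\<forall>i. c i \<le> a i" using pr(6,8,9) by (metis not_less order.refl)
      then show False using pr(2,4) ia Pa by blast
    qed
    show ?thesis unfolding st
    proof (rule "1.IH"(2)[OF _ Pa pr(1-5)])
      let ?a = "a(d - 2 := a (d - 2) + 1)"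
      show "2 \<le> d \<and> supp_in d a \<and> (\<forall>i<d. lo i \<le> a i \<and> a i \<le> hi i)"
        using pr(1) ia by (simp add: inb_def)
      show "\<forall>i. i \<noteq> d - 2 \<longrightarrow> i \<noteq> d - 1 \<longrightarrow> ?a i = c i"
        using pr(6) by simp
      show "lo (d - 2) \<le> ?a (d - 2)" using pr(7) by simp
      show "?a (d - 2) \<le> c (d - 2)" using lt by simp
      show "c (d - 1) \<le> ?a (d - 1)" using pr(9) dd by simp
      show "?a (d - 1) \<le> hi (d - 1)" using pr(10) dd by simp
    qed
  qed
qed

definition MinP2 :: "((nat \<Rightarrow> int) \<Rightarrow> bool) \<Rightarrow> (nat \<Rightarrow> int) \<Rightarrow> bool" where
  "MinP2 P x \<longleftrightarrow> supp_in 2 x \<and> P x \<and> (\<forall>c'. supp_in 2 c' \<longrightarrow> P c' \<longrightarrow> (\<forall>i. c' i \<le> x i) \<longrightarrow> c' = x)"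

definition Inv2 :: "((nat \<Rightarrow> int) \<Rightarrow> bool) \<Rightarrow> (nat \<Rightarrow> int) \<Rightarrow> bool" where
  "Inv2 P a \<longleftrightarrow> (\<forall>c'. supp_in 2 c' \<longrightarrow> P c' \<longrightarrow> c' 0 < a 0 \<longrightarrow> c' 1 \<le> a 1 \<longrightarrow> False)"

lemma supp2_eq: "supp_in 2 x \<Longrightarrow> supp_in 2 y \<Longrightarrow> x 0 = y 0 \<Longrightarrow> x 1 = y 1 \<Longrightarrow> x = y"
proof
  fix i assume "supp_in 2 x" "supp_in 2 y" "x 0 = y 0" "x 1 = y 1"
  then show "x i = y i" unfolding supp_in_def by (cases "i = 0"; cases "i = 1") auto
qed

lemma supp2_le: fixes x y :: "nat \<Rightarrow> int" shows "supp_in 2 x \<Longrightarrow> supp_in 2 y \<Longrightarrow> x 0 \<le> y 0 \<Longrightarrow> x 1 \<le> y 1 \<Longrightarrow> \<forall>i. x i \<le> y i"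
proof
  fix i assume "supp_in 2 x" "supp_in 2 y" "x 0 \<le> y 0" "x 1 \<le> y 1"
  then show "x i \<le> y i" unfolding supp_in_def by (cases "i = 0"; cases "i = 1") auto
qed

lemma min_out2:
  assumes Hup: "\<forall>a c. P a \<longrightarrow> (\<forall>i. a i \<le> c i) \<longrightarrow> inb 2 lo hi c \<longrightarrow> P c"
    and Hlow: "\<forall>c'. P c' \<longrightarrow> (\<forall>i<2. lo i \<le> c' i)"
    and b: "b = a(1 := a 1 + 1)" and Ib: "Inv2 P b" and Pa: "\<not> P a" and Pb: "P b" and ib: "inb 2 lo hi b"
    and alt: "inb 2 lo hi a \<or> a 1 < lo 1"
  shows "MinP2 P b"
  unfolding MinP2_def
proof (intro conjI allI impI)
  show sb: "supp_in 2 b" using ib by (simp add: inb_def)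
  show "P b" by (rule Pb)
  have sa: "supp_in 2 a" using sb b unfolding supp_in_def by (metis fun_upd_other one_less_numeral_iff semiring_norm(76) not_le le_less_trans)
  fix c' assume sc: "supp_in 2 c'" and Pc: "P c'" and le: "\<forall>i. c' i \<le> b i"
  have e0: "c' 0 = b 0"
  proof (rule ccontr)
    assume "c' 0 \<noteq> b 0"
    then have "c' 0 < b 0" using le[rule_format, of 0] by simp
    then show False using Ib sc Pc le unfolding Inv2_def by blast
  qed
  have e1: "c' 1 = b 1"
  proof (rule ccontr)
    assume "c' 1 \<noteq> b 1"
    then have c1: "c' 1 \<le> a 1" using le[rule_format, of 1] b by simp
    have "c' 0 \<le> a 0" using e0 b by simp
    then have lea: "\<forall>i. c' i \<le> a i" using supp2_le[OF sc sa _ c1] by simp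
    show False using alt
    proof
      assume "inb 2 lo hi a"
      then show False using Hup Pc lea Pa by blast
    next
      assume "a 1 < lo 1"
      moreover have "lo 1 \<le> c' 1" using Hlow Pc by simp
      ultimately show False using c1 by simp
    qed
  qed
  show "c' = b" by (rule supp2_eq[OF sc sb e0 e1])
qed

lemma loop_min2:
  "d = 2 \<Longrightarrow> (\<forall>a c. P a \<longrightarrow> (\<forall>i. a i \<le> c i) \<longrightarrow> inb d lo hi c \<longrightarrow> P c) \<Longrightarrow>
   (\<forall>c'. P c' \<longrightarrow> (\<forall>i<2. lo i \<le> c' i)) \<Longrightarrow>
   (\<forall>x\<in>set out. MinP2 P x) \<Longrightarrow> Inv2 P a \<Longrightarrow>
   (\<not> P b \<or> (b = a(1 := a 1 + 1) \<and> inb d lo hi b \<and> Inv2 P b) \<or> (b = a \<and> inb d lo hi a)) \<Longrightarrow>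
   \<forall>x\<in>set (stair_loop d lo hi P a b out). MinP2 P x"
proof (induction d lo hi P a b out rule: stair_loop.induct)
  case (1 d lo hi P a b out)
  note pr = "1.prems"
  have d2: "d = 2" by (rule pr(1))
  have Hup: "\<forall>a c. P a \<longrightarrow> (\<forall>i. a i \<le> c i) \<longrightarrow> inb 2 lo hi c \<longrightarrow> P c" using pr(2) d2 by simp
  show ?case
  proof (cases "2 \<le> d \<and> inb d lo hi a")
    case True
    then have ia: "inb 2 lo hi a" using d2 by simp
    have sa: "supp_in 2 a" using ia by (simp add: inb_def)
    show ?thesis
    proof (cases "P a")
      case Pa: True
      show ?thesis unfolding loop_step1[where P=P and b=b and out=out, OF conjunct1[OF True] conjunct2[OF True] Pa]
      proof (rule "1.IH"(1)[OF _ Pa pr(1-4)])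
        show "2 \<le> d \<and> supp_in d a \<and> (\<forall>i<d. lo i \<le> a i \<and> a i \<le> hi i)" using True by (simp add: inb_def)
        show "Inv2 P (a(d - 1 := a (d - 1) - 1))"
          using pr(5) d2 unfolding Inv2_def by fastforce
        have "a = (a(d - 1 := a (d - 1) - 1))(1 := (a(d - 1 := a (d - 1) - 1)) 1 + 1)"
          using d2 by (simp add: fun_eq_iff)
        then show "\<not> P a \<or> (a = (a(d - 1 := a (d - 1) - 1))(1 := (a(d - 1 := a (d - 1) - 1)) 1 + 1) \<and> inb d lo hi a \<and> Inv2 P a) \<or>
          (a = a(d - 1 := a (d - 1) - 1) \<and> inb d lo hi (a(d - 1 := a (d - 1) - 1)))"
          using True pr(5) by blast
      qed
    next
      case Pa: False
      show ?thesis unfolding loop_step2[where P=P and b=b and out=out, OF conjunct1[OF True] conjunct2[OF True] Pa]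
      proof (rule "1.IH"(2)[OF _ Pa pr(1-3)])
        show "2 \<le> d \<and> supp_in d a \<and> (\<forall>i<d. lo i \<le> a i \<and> a i \<le> hi i)" using True by (simp add: inb_def)
        show "\<forall>x\<in>set (if P b then out @ [b] else out). MinP2 P x"
        proof (cases "P b")
          case Pb: True
          have bi: "b = a(1 := a 1 + 1) \<and> inb d lo hi b \<and> Inv2 P b" using pr(6) Pb Pa by auto
          have "inb d lo hi b" using bi by blast
          then have ib: "inb 2 lo hi b" using d2 by simp
          have "MinP2 P b"
            by (rule min_out2[OF Hup pr(3) conjunct1[OF bi] conjunct2[OF conjunct2[OF bi]] Pa Pb ib]) (use ia in simp)
          then show ?thesis using pr(4) Pb by auto
        next
          case False then show ?thesis using pr(4) by simp
        qed
        show "Inv2 P (a(d - 2 := a (d - 2) + 1))"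
          unfolding Inv2_def
        proof (intro allI impI)
          fix c' assume sc: "supp_in 2 c'" and Pc: "P c'" and l0: "c' 0 < (a(d - 2 := a (d - 2) + 1)) 0"
            and l1: "c' 1 \<le> (a(d - 2 := a (d - 2) + 1)) 1"
          have l0': "c' 0 \<le> a 0" and l1': "c' 1 \<le> a 1" using l0 l1 d2 by auto
          show False
          proof (cases "c' 0 < a 0")
            case True then show False using pr(5) sc Pc l1' unfolding Inv2_def by blast
          next
            case False
            have "\<forall>i. c' i \<le> a i" using supp2_le[OF sc sa l0' l1'] .
            then show False using Hup Pc ia Pa by blast
          qed
        qed
        show "\<not> P a \<or> (a = (a(d - 2 := a (d - 2) + 1))(1 := (a(d - 2 := a (d - 2) + 1)) 1 + 1) \<and> inb d lo hi a \<and> Inv2 P a) \<or>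
          (a = a(d - 2 := a (d - 2) + 1) \<and> inb d lo hi (a(d - 2 := a (d - 2) + 1)))"
          using Pa by simp
      qed
    qed
  next
    case False
    show ?thesis unfolding loop_stop[where P=P and b=b and out=out, OF False]
    proof (cases "P b")
      case Pb: True
      have bi: "b = a(1 := a 1 + 1) \<and> inb d lo hi b \<and> Inv2 P b"
        using pr(6) Pb False d2 by auto
      have na: "\<not> inb 2 lo hi a" using False d2 by simp
      have alt: "a 1 < lo 1"
      proof (rule ccontr)
        assume "\<not> a 1 < lo 1"
        have "inb d lo hi b" using bi by blast
          then have ib: "inb 2 lo hi b" using d2 by simp
        have "inb 2 lo hi a"
          unfolding inb_def
        proof (intro conjI allI impI)
          show "supp_in 2 a" using ib bi unfolding inb_def supp_in_def
            by (metis fun_upd_other le_less_trans not_le one_less_numeral_iff semiring_norm(76))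
          fix i :: nat assume "i < 2"
          then have i01: "i = 0 \<or> i = 1" by linarith
          have bb: "b 0 = a 0" "b 1 = a 1 + 1" using bi by auto
          have ibb: "lo 0 \<le> b 0" "b 0 \<le> hi 0" "b 1 \<le> hi 1" using ib by (auto simp: inb_def)
          have "lo i \<le> a i \<and> a i \<le> hi i"
            using i01 bb ibb \<open>\<not> a 1 < lo 1\<close> by auto
          then show "lo i \<le> a i" "a i \<le> hi i" by auto
        qed
        then show False using na by simp
      qed
      have Pa: "\<not> P a"
      proof
        assume "P a"
        have "\<forall>i<2. lo i \<le> a i" using pr(3) \<open>P a\<close> by blast
        then have "lo 1 \<le> a 1" by simp
        then show False using alt by simp
      qed
      have "inb d lo hi b" using bi by blast
          then have ib: "inb 2 lo hi b" using d2 by simp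
      have "MinP2 P b"
        by (rule min_out2[OF Hup pr(3) conjunct1[OF bi] conjunct2[OF conjunct2[OF bi]] Pa Pb ib]) (use alt in simp)
      then show "\<forall>x\<in>set (if P b then out @ [b] else out). MinP2 P x" using pr(4) Pb by auto
    next
      case False
      then show "\<forall>x\<in>set (if P b then out @ [b] else out). MinP2 P x" using pr(4) by simp
    qed
  qed
qed


locale stc =
  fixes d :: nat and E :: "(nat \<Rightarrow> nat) set" and r :: real
  assumes d1: "d \<ge> 1" and M: "monomial_ideal_exps d E" and Ene: "E \<noteq> {}" and r0: "r \<ge> 0"
begin

lemma E_supp: "a \<in> E \<Longrightarrow> supp_in d a"
  using M unfolding monomial_ideal_exps_def by blast

lemma G_sub: "min_gens E \<subseteq> E" unfolding min_gens_def by auto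

lemma G_fin: "finite (min_gens E)"
proof (rule antichain_finite[of _ d])
  show "\<forall>a\<in>min_gens E. supp_in d a" using G_sub E_supp by blast
  show "\<forall>a\<in>min_gens E. \<forall>b\<in>min_gens E. (\<forall>i. a i \<le> b i) \<longrightarrow> a = b"
    unfolding min_gens_def by blast
qed

lemma G_ne: "min_gens E \<noteq> {}"
  using Ene exists_min_gen[OF M] by blast

lemma Vimg: "(\<lambda>v. v i) ` Vset E r = (\<lambda>g. \<lceil>r * real (g i)\<rceil>) ` min_gens E"
  unfolding Vset_def by (simp add: image_image)

lemma minV_le: "g \<in> min_gens E \<Longrightarrow> minV E r i \<le> \<lceil>r * real (g i)\<rceil>"
  unfolding minV_def Vimg using G_fin by (intro Min_le) auto

lemma maxV_ge: "g \<in> min_gens E \<Longrightarrow> \<lceil>r * real (g i)\<rceil> \<le> maxV E r i"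
  unfolding maxV_def Vimg using G_fin by (intro Max_ge) auto

lemma minV_ex: "\<exists>g\<in>min_gens E. minV E r i = \<lceil>r * real (g i)\<rceil>"
proof -
  have "minV E r i \<in> (\<lambda>g. \<lceil>r * real (g i)\<rceil>) ` min_gens E"
    unfolding minV_def Vimg using G_fin G_ne by (intro Min_in) auto
  then show ?thesis by auto
qed

lemma minV_nn: "0 \<le> minV E r i"
proof -
  obtain g where g: "minV E r i = \<lceil>r * real (g i)\<rceil>" using minV_ex[of i] by blast
  have "0 \<le> r * real (g i)" using r0 by simp
  then show ?thesis unfolding g by simp
qed

lemma maxV_nn: "0 \<le> maxV E r i"
proof -
  obtain g where "g \<in> min_gens E" using G_ne by blast
  then have "\<lceil>r * real (g i)\<rceil> \<le> maxV E r i" by (rule maxV_ge)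
  moreover have "0 \<le> r * real (g i)" using r0 by simp
  then have "0 \<le> \<lceil>r * real (g i)\<rceil>" by simp
  ultimately show ?thesis by linarith
qed

lemma P_unfold:
  assumes "in_rNP r E a"
  obtains S u where "finite S" "S \<noteq> {}" "S \<subseteq> E" "\<forall>e\<in>S. 0 \<le> u e" "sum u S = 1"
    "\<And>i. real_of_int (a i) = r * (\<Sum>e\<in>S. u e * real (e i))"
proof -
  obtain x where x: "x \<in> newton_polyhedron E" and ax: "(\<lambda>i. real_of_int (a i)) = (\<lambda>i. r * x i)"
    using assms unfolding in_rNP_def scaled_NP_def by blast
  obtain S u where S: "finite S" "S \<noteq> {}" "S \<subseteq> E" "\<forall>e\<in>S. 0 \<le> u e" "sum u S = 1"
    and xd: "x = (\<lambda>i. \<Sum>a\<in>S. u a * real (a i))"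
    using x unfolding newton_polyhedron_def by blast
  show ?thesis by (rule that[OF S]) (use ax xd in \<open>simp add: fun_eq_iff\<close>)
qed

lemma P_supp: "in_rNP r E a \<Longrightarrow> supp_in d a"
proof -
  assume "in_rNP r E a"
  then obtain x where x: "x \<in> newton_polyhedron E" and ax: "(\<lambda>i. real_of_int (a i)) = (\<lambda>i. r * x i)"
    unfolding in_rNP_def scaled_NP_def by blast
  have "\<forall>i\<ge>d. x i = 0" using NP_supp[OF M x] unfolding supp_in_def .
  then show ?thesis using ax unfolding supp_in_def by (metis of_int_eq_0_iff mult_zero_right)
qed

lemma P_r0: "r = 0 \<Longrightarrow> in_rNP r E a \<Longrightarrow> a = (\<lambda>_. 0)"
  unfolding in_rNP_def scaled_NP_def by (auto simp: fun_eq_iff)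

lemma P_lower:
  assumes P: "in_rNP r E a"
  shows "minV E r i \<le> a i"
proof -
  obtain S u where S: "finite S" "S \<noteq> {}" "S \<subseteq> E" "\<forall>e\<in>S. 0 \<le> u e" "sum u S = 1"
    and ai: "\<And>i. real_of_int (a i) = r * (\<Sum>e\<in>S. u e * real (e i))"
    using P_unfold[OF P] by blast
  define m where "m = Min ((\<lambda>e. e i) ` S)"
  have "m \<in> (\<lambda>e. e i) ` S" unfolding m_def using S by (intro Min_in) auto
  then obtain es where es: "es \<in> S" "es i = m" by auto
  have mle: "m \<le> e i" if "e \<in> S" for e unfolding m_def using S that by (intro Min_le) auto
  have "(\<Sum>e\<in>S. u e * real m) \<le> (\<Sum>e\<in>S. u e * real (e i))"
    by (rule sum_mono) (use S(4) mle in \<open>auto intro: mult_left_mono\<close>)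
  then have "real m \<le> (\<Sum>e\<in>S. u e * real (e i))" using S(5) by (simp add: sum_distrib_right[symmetric])
  then have "r * real m \<le> real_of_int (a i)" using ai r0 by (simp add: mult_left_mono)
  then have c1: "\<lceil>r * real m\<rceil> \<le> a i" by (simp add: ceiling_le_iff)
  obtain g where g: "g \<in> min_gens E" "\<forall>j. g j \<le> es j" using exists_min_gen[OF M] es S(3) by blast
  have "r * real (g i) \<le> r * real m" using g(2) es(2) r0 by (metis mult_left_mono of_nat_mono)
  then have "\<lceil>r * real (g i)\<rceil> \<le> \<lceil>r * real m\<rceil>" by (rule ceiling_mono)
  then show ?thesis using minV_le[OF g(1), of i] c1 by linarith
qed

lemma P_point:
  assumes g: "g \<in> E"
  shows "in_rNP r E (\<lambda>i. \<lceil>r * real (g i)\<rceil>)"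
proof -
  have gN: "(\<lambda>i. real (g i)) \<in> newton_polyhedron E"
    unfolding newton_polyhedron_def using g
    by (intro CollectI exI[of _ "{g}"] exI[of _ "\<lambda>_. 1"]) auto
  have rg: "(\<lambda>i. r * real (g i)) \<in> scaled_NP r E"
    unfolding scaled_NP_def by (rule image_eqI[where f="\<lambda>v i. r * v i", OF _ gN]) simp
  show ?thesis
  proof (cases "r = 0")
    case True
    then show ?thesis using rg unfolding in_rNP_def by simp
  next
    case False
    then have "r > 0" using r0 by simp
    show ?thesis unfolding in_rNP_def
    proof (rule sNP_up[OF M \<open>r > 0\<close> rg])
      show "\<forall>i. r * real (g i) \<le> real_of_int \<lceil>r * real (g i)\<rceil>" by simp
      show "supp_in d (\<lambda>i. real_of_int \<lceil>r * real (g i)\<rceil>)" using E_supp[OF g] by (simp add: supp_in_def)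
    qed
  qed
qed

lemma r0_V: "r = 0 \<Longrightarrow> minV E r i = 0 \<and> maxV E r i = 0"
proof -
  assume "r = 0"
  then have "(\<lambda>v. v i) ` Vset E r = {0}" unfolding Vimg using G_ne by auto
  then show ?thesis unfolding minV_def maxV_def by simp
qed

lemma r0_hype: "r = 0 \<Longrightarrow> c \<in> hype d E r \<Longrightarrow> c = (\<lambda>_. 0)"
  unfolding hype_def supp_in_def using r0_V by (auto simp: fun_eq_iff) (metis antisym not_le)

lemma P_upper:
  assumes P: "in_rNP r E a" and i: "i < d" and gt: "a i > maxV E r i"
  shows "in_rNP r E (a(i := a i - 1))"
proof (cases "r = 0")
  case True
  then show ?thesis using P_r0[OF True P] gt maxV_nn[of i] by simp
next
  case False
  then have rp: "r > 0" using r0 by simp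
  obtain S u where S: "finite S" "S \<noteq> {}" "S \<subseteq> E" "\<forall>e\<in>S. 0 \<le> u e" "sum u S = 1"
    and ai: "\<And>i. real_of_int (a i) = r * (\<Sum>e\<in>S. u e * real (e i))"
    using P_unfold[OF P] by blast
  have "\<forall>e\<in>S. \<exists>g. g \<in> min_gens E \<and> (\<forall>j. g j \<le> e j)"
    using exists_min_gen[OF M] S(3) by blast
  then obtain gs where gs: "\<And>e. e \<in> S \<Longrightarrow> gs e \<in> min_gens E \<and> (\<forall>j. gs e j \<le> e j)"
    by metis
  define p where "p = (\<lambda>j. \<Sum>e\<in>S. u e * real (gs e j))"
  have pN: "p \<in> newton_polyhedron E" unfolding p_def
    by (rule NP_intro) (use S gs G_sub in blast)+
  have rp_in: "(\<lambda>j. r * p j) \<in> scaled_NP r E"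
    unfolding scaled_NP_def by (rule image_eqI[where f="\<lambda>v i. r * v i", OF _ pN]) simp
  have le1: "r * p j \<le> real_of_int (a j)" for j
  proof -
    have "p j \<le> (\<Sum>e\<in>S. u e * real (e j))" unfolding p_def
      by (rule sum_mono) (use S(4) gs in \<open>auto intro: mult_left_mono\<close>)
    then show ?thesis using ai[of j] r0 by (simp add: mult_left_mono)
  qed
  have le2: "r * p i \<le> real_of_int (maxV E r i)"
  proof -
    have "r * p i = (\<Sum>e\<in>S. u e * (r * real (gs e i)))" unfolding p_def
      by (simp add: sum_distrib_left algebra_simps)
    also have "\<dots> \<le> (\<Sum>e\<in>S. u e * real_of_int (maxV E r i))"
    proof (rule sum_mono)
      fix e assume e: "e \<in> S"
      have "r * real (gs e i) \<le> real_of_int \<lceil>r * real (gs e i)\<rceil>" by simp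
      also have "\<dots> \<le> real_of_int (maxV E r i)" using maxV_ge[of "gs e" i] gs[OF e] by simp
      finally show "u e * (r * real (gs e i)) \<le> u e * real_of_int (maxV E r i)"
        using S(4) e by (simp add: mult_left_mono)
    qed
    also have "\<dots> = real_of_int (maxV E r i)" using S(5) by (simp add: sum_distrib_right[symmetric])
    finally show ?thesis .
  qed
  show ?thesis unfolding in_rNP_def
  proof (rule sNP_up[OF M rp rp_in])
    show "\<forall>j. r * p j \<le> real_of_int ((a(i := a i - 1)) j)"
      using le1 le2 gt by auto
    show "supp_in d (\<lambda>j. real_of_int ((a(i := a i - 1)) j))"
      using P_supp[OF P] i unfolding supp_in_def by auto
  qed
qed

lemma P_up_box:
  assumes P: "in_rNP r E a" and le: "\<forall>i. a i \<le> c i" and c: "c \<in> hype d E r"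
  shows "in_rNP r E c"
proof (cases "r = 0")
  case True
  then have "c = a" using P_r0[OF True P] r0_hype[OF True c] by simp
  then show ?thesis using P by simp
next
  case False
  then have rp: "r > 0" using r0 by simp
  show ?thesis unfolding in_rNP_def
    by (rule sNP_up[OF M rp P[unfolded in_rNP_def]]) (use le c in \<open>auto simp: hype_def supp_in_def\<close>)
qed

abbreviation "P \<equiv> in_rNP r E"
abbreviation "lo \<equiv> minV E r"
abbreviation "hi \<equiv> maxV E r"

definition MinP :: "(nat \<Rightarrow> int) \<Rightarrow> bool" where
  "MinP c \<longleftrightarrow> supp_in d c \<and> P c \<and> (\<forall>c'. supp_in d c' \<longrightarrow> P c' \<longrightarrow> (\<forall>i. c' i \<le> c i) \<longrightarrow> c' = c)"

lemma hype_inb: "c \<in> hype d E r \<longleftrightarrow> inb d lo hi c"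
  by (simp add: hype_def inb_def)

lemma MinP_inb:
  assumes "MinP c" shows "inb d lo hi c"
  unfolding inb_def
proof (intro conjI allI impI)
  have sc: "supp_in d c" and Pc: "P c" and mn: "\<forall>c'. supp_in d c' \<longrightarrow> P c' \<longrightarrow> (\<forall>i. c' i \<le> c i) \<longrightarrow> c' = c"
    using assms unfolding MinP_def by auto
  show "supp_in d c" by (rule sc)
  fix i assume i: "i < d"
  show "lo i \<le> c i" using P_lower[OF Pc] .
  show "c i \<le> hi i"
  proof (rule ccontr)
    assume "\<not> c i \<le> hi i"
    then have gt: "hi i < c i" by simp
    have P1: "P (c(i := c i - 1))" by (rule P_upper[OF Pc i gt])
    have "supp_in d (c(i := c i - 1))" using sc i unfolding supp_in_def by auto
    moreover have "\<forall>j. (c(i := c i - 1)) j \<le> c j" by simp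
    ultimately have "c(i := c i - 1) = c" using mn P1 by blast
    then have "c i - 1 = c i" by (metis fun_upd_same)
    then show False by simp
  qed
qed

lemma MinP_nonneg: "MinP c \<Longrightarrow> 0 \<le> c i"
proof -
  assume m: "MinP c"
  show "0 \<le> c i"
  proof (cases "i < d")
    case True
    then show ?thesis using MinP_inb[OF m] minV_nn[of i] unfolding inb_def by (meson order_trans)
  next
    case False
    then show ?thesis using m unfolding MinP_def supp_in_def by simp
  qed
qed

lemma Hup: "\<forall>a c. P a \<longrightarrow> (\<forall>i. a i \<le> c i) \<longrightarrow> inb d lo hi c \<longrightarrow> P c"
  using P_up_box unfolding hype_inb by blast

lemma exists_MinP:
  assumes Pa: "P a" shows "\<exists>c. MinP c \<and> (\<forall>i. c i \<le> a i)"
proof -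
  define m where "m c = (\<Sum>i<d. nat (c i))" for c :: "nat \<Rightarrow> int"
  let ?Q = "\<lambda>c. supp_in d c \<and> P c \<and> (\<forall>i. c i \<le> a i)"
  have Qa: "?Q a" using Pa P_supp[OF Pa] by simp
  obtain c where Qc: "?Q c" and cmin: "\<forall>y. ?Q y \<longrightarrow> m c \<le> m y"
    using ex_has_least_nat[of ?Q a m] Qa by blast
  have "MinP c"
    unfolding MinP_def
  proof (intro conjI allI impI)
    show "supp_in d c" "P c" using Qc by auto
    fix c' assume sc': "supp_in d c'" and Pc': "P c'" and le: "\<forall>i. c' i \<le> c i"
    show "c' = c"
    proof (rule ccontr)
      assume "c' \<noteq> c"
      then obtain j where j: "c' j \<noteq> c j" by auto
      have jd: "j < d" using j sc' Qc unfolding supp_in_def by (cases "j < d") auto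
      have nn: "0 \<le> c' i" for i
      proof (cases "i < d")
        case True then show ?thesis using P_lower[OF Pc', of i] minV_nn[of i] by simp
      next
        case False then show ?thesis using sc' unfolding supp_in_def by simp
      qed
      have "m c' < m c" unfolding m_def
      proof (rule sum_strict_mono_ex1)
        show "finite {..<d}" by simp
        show "\<forall>x\<in>{..<d}. nat (c' x) \<le> nat (c x)" using le by (simp add: nat_mono)
        have "c' j < c j" using le[rule_format, of j] j by simp
        then have "nat (c' j) < nat (c j)" using nn[of j] by simp
        then show "\<exists>x\<in>{..<d}. nat (c' x) < nat (c x)" using jd by blast
      qed
      moreover have "?Q c'" using sc' Pc' le Qc by (meson order_trans)
      then have "m c \<le> m c'" using cmin by blast
      ultimately show False by simp
    qed
  qed
  then show ?thesis using Qc by blast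
qed

definition mvec :: "nat \<Rightarrow> int" where "mvec = (\<lambda>i. if i = 0 then lo 0 else 0)"

lemma d1_stc: "d = 1 \<Longrightarrow> staircase d E r = {mvec}"
  unfolding staircase_def mvec_def by simp

lemma d1_P: assumes "d = 1" shows "P mvec"
proof -
  obtain g where g: "g \<in> min_gens E" "lo 0 = \<lceil>r * real (g 0)\<rceil>" using minV_ex[of 0] by blast
  have "supp_in 1 g" using E_supp G_sub g(1) assms by blast
  then have "mvec = (\<lambda>i. \<lceil>r * real (g i)\<rceil>)" unfolding mvec_def supp_in_def using g(2)
    by (auto simp: fun_eq_iff)
  then show ?thesis using P_point G_sub g(1) by auto
qed

lemma d1_MinP: assumes d: "d = 1" shows "MinP mvec"
  unfolding MinP_def
proof (intro conjI allI impI)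
  show "supp_in d mvec" using d by (simp add: supp_in_def mvec_def)
  show "P mvec" by (rule d1_P[OF d])
  fix c' assume sc: "supp_in d c'" and Pc: "P c'" and le: "\<forall>i. c' i \<le> mvec i"
  show "c' = mvec"
  proof
    fix i show "c' i = mvec i"
    proof (cases "i = 0")
      case True
      then show ?thesis using P_lower[OF Pc, of 0] le[rule_format, of 0] by (simp add: mvec_def)
    next
      case False
      then show ?thesis using sc d by (simp add: supp_in_def mvec_def)
    qed
  qed
qed

lemma d1_only: assumes d: "d = 1" and m: "MinP c" shows "c = mvec"
proof -
  have Pc: "P c" using m unfolding MinP_def by simp
  have le: "\<forall>i. mvec i \<le> c i"
  proof
    fix i show "mvec i \<le> c i"
    proof (cases "i = 0")
      case True then show ?thesis using P_lower[OF Pc, of 0] by (simp add: mvec_def)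
    next
      case False then show ?thesis using MinP_nonneg[OF m, of i] by (simp add: mvec_def)
    qed
  qed
  have mm: "supp_in d mvec" "P mvec" using d1_MinP[OF d] unfolding MinP_def by auto
  have "\<forall>c'. supp_in d c' \<longrightarrow> P c' \<longrightarrow> (\<forall>i. c' i \<le> c i) \<longrightarrow> c' = c" using m unfolding MinP_def by simp
  then have "mvec = c" using mm le by blast
  then show ?thesis by simp
qed

lemma stc_out: "b \<in> staircase d E r \<Longrightarrow> P b \<and> inb d lo hi b"
proof -
  assume b: "b \<in> staircase d E r"
  show ?thesis
  proof (cases "d = 1")
    case True
    then have bm: "b = mvec" using b d1_stc by simp
    have m: "MinP mvec" by (rule d1_MinP[OF True])
    have "inb d lo hi mvec" by (rule MinP_inb[OF m])
    moreover have "P mvec" using m unfolding MinP_def by simp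
    ultimately show ?thesis using bm by simp
  next
    case False
    then have "b \<in> (\<Union>a\<in>start_points d E r. set (stair_loop d lo hi P a a []))"
      using b unfolding staircase_def by simp
    then obtain s where s: "s \<in> start_points d E r" and bs: "b \<in> set (stair_loop d lo hi P s s [])"
      by blast
    have "inb d lo hi s" using s unfolding start_points_def hype_inb by simp
    then have "\<forall>x\<in>set (stair_loop d lo hi P s s []). P x \<and> inb d lo hi x"
      by (intro loop_out) auto
    then show ?thesis using bs by blast
  qed
qed

lemma MinP_in_stc: assumes m: "MinP c" shows "c \<in> staircase d E r"
proof (cases "d = 1")
  case True
  then show ?thesis using d1_only[OF True m] d1_stc[OF True] by simp
next
  case False
  then have d2: "2 \<le> d" using d1 by simp
  have ic: "inb d lo hi c" by (rule MinP_inb[OF m])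
  define s where "s = c(d - 2 := lo (d - 2), d - 1 := hi (d - 1))"
  have dd: "d - 2 \<noteq> d - 1" "d - 2 < d" "d - 1 < d" using d2 by auto
  have bnd: "lo (d - 2) \<le> c (d - 2)" "c (d - 2) \<le> hi (d - 2)" "lo (d - 1) \<le> c (d - 1)" "c (d - 1) \<le> hi (d - 1)"
    using ic dd unfolding inb_def by auto
  have isb: "inb d lo hi s"
    unfolding inb_def
  proof (intro conjI allI impI)
    show "supp_in d s" using ic dd unfolding inb_def supp_in_def s_def by auto
    fix i assume i: "i < d"
    show "lo i \<le> s i" "s i \<le> hi i" using ic i bnd dd unfolding inb_def s_def by auto
  qed
  have sp: "s \<in> start_points d E r"
    unfolding start_points_def hype_inb using isb dd by (simp add: s_def)
  have "c \<in> set (stair_loop d lo hi P s s [])"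
  proof (rule loop_reach[OF d2 Hup ic])
    show "P c" using m unfolding MinP_def by simp
    show "\<forall>c'. inb d lo hi c' \<longrightarrow> P c' \<longrightarrow> (\<forall>i. c' i \<le> c i) \<longrightarrow> c' = c"
      using m unfolding MinP_def inb_def by blast
    show "\<forall>i. i \<noteq> d - 2 \<longrightarrow> i \<noteq> d - 1 \<longrightarrow> s i = c i" by (simp add: s_def)
    show "lo (d - 2) \<le> s (d - 2)" "s (d - 2) \<le> c (d - 2)" "c (d - 1) \<le> s (d - 1)" "s (d - 1) \<le> hi (d - 1)"
      using bnd dd by (auto simp: s_def)
  qed
  then show ?thesis using sp False unfolding staircase_def by auto
qed

lemma stc_MinP2: assumes d: "d \<le> 2" and b: "b \<in> staircase d E r" shows "MinP b"
proof (cases "d = 1")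
  case True
  then show ?thesis using b d1_stc d1_MinP by simp
next
  case False
  then have d2: "d = 2" using d d1 by simp
  have "b \<in> (\<Union>a\<in>start_points d E r. set (stair_loop d lo hi P a a []))"
    using b False unfolding staircase_def by simp
  then obtain s where s: "s \<in> start_points d E r" and bs: "b \<in> set (stair_loop d lo hi P s s [])"
    by blast
  have isb: "inb d lo hi s" and s0: "s 0 = lo 0"
    using s d2 unfolding start_points_def hype_inb by auto
  have Hlow: "\<forall>c'. P c' \<longrightarrow> (\<forall>i<2. lo i \<le> c' i)" using P_lower by blast
  have "\<forall>x\<in>set (stair_loop d lo hi P s s []). MinP2 P x"
  proof (rule loop_min2[OF d2 Hup Hlow])
    show "\<forall>x\<in>set []. MinP2 P x" by simp
    show "Inv2 P s" unfolding Inv2_def using P_lower s0 by (metis not_less)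
    show "\<not> P s \<or> (s = s(1 := s 1 + 1) \<and> inb d lo hi s \<and> Inv2 P s) \<or> (s = s \<and> inb d lo hi s)"
      using isb by simp
  qed
  then have "MinP2 P b" using bs by blast
  then show ?thesis using d2 unfolding MinP2_def MinP_def by simp
qed

lemma IC_mem: "c \<in> int_closure_exps d E r \<longleftrightarrow>
   supp_in d c \<and> (\<exists>a. supp_in d a \<and> P (\<lambda>i. int (a i)) \<and> (\<forall>i. a i \<le> c i))"
  unfolding int_closure_exps_def in_rNP_def by simp

lemma min_gens_IC: "x \<in> min_gens (int_closure_exps d E r) \<longleftrightarrow> MinP (\<lambda>i. int (x i))"
proof
  assume x: "x \<in> min_gens (int_closure_exps d E r)"
  then have xI: "x \<in> int_closure_exps d E r" and xm: "\<forall>y\<in>int_closure_exps d E r. (\<forall>i. y i \<le> x i) \<longrightarrow> y = x"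
    unfolding min_gens_def by auto
  obtain a where a: "supp_in d a" "P (\<lambda>i. int (a i))" "\<forall>i. a i \<le> x i" using xI IC_mem by blast
  have "a \<in> int_closure_exps d E r" using a IC_mem by blast
  then have ax: "a = x" using xm a(3) by blast
  show "MinP (\<lambda>i. int (x i))"
    unfolding MinP_def
  proof (intro conjI allI impI)
    show "supp_in d (\<lambda>i. int (x i))" using a ax by (simp add: supp_in_def)
    show "P (\<lambda>i. int (x i))" using a ax by simp
    fix c' assume sc: "supp_in d c'" and Pc: "P c'" and le: "\<forall>i. c' i \<le> int (x i)"
    have nn: "0 \<le> c' i" for i
    proof (cases "i < d")
      case True then show ?thesis using P_lower[OF Pc, of i] minV_nn[of i] by simp
    next
      case False then show ?thesis using sc unfolding supp_in_def by simp
    qed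
    have ce: "(\<lambda>i. int (nat (c' i))) = c'" using nn by (simp add: fun_eq_iff)
    have "(\<lambda>i. nat (c' i)) \<in> int_closure_exps d E r"
      unfolding IC_mem using sc Pc ce by (auto simp: supp_in_def intro!: exI[of _ "\<lambda>i. nat (c' i)"])
    moreover have "\<forall>i. nat (c' i) \<le> x i" using le by (simp add: nat_le_iff)
    ultimately have "(\<lambda>i. nat (c' i)) = x" using xm by metis
    then show "c' = (\<lambda>i. int (x i))" using ce by auto
  qed
next
  assume m: "MinP (\<lambda>i. int (x i))"
  have sx: "supp_in d x" and Px: "P (\<lambda>i. int (x i))" using m unfolding MinP_def supp_in_def by auto
  have xI: "x \<in> int_closure_exps d E r" using sx Px IC_mem by blast
  show "x \<in> min_gens (int_closure_exps d E r)"
    unfolding min_gens_def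
  proof (intro CollectI conjI ballI impI xI)
    fix y assume yI: "y \<in> int_closure_exps d E r" and le: "\<forall>i. y i \<le> x i"
    obtain a where a: "supp_in d a" "P (\<lambda>i. int (a i))" "\<forall>i. a i \<le> y i" using yI IC_mem by blast
    have "supp_in d (\<lambda>i. int (a i))" using a(1) by (simp add: supp_in_def)
    moreover have "\<forall>i. int (a i) \<le> int (x i)" using a(3) le by (meson of_nat_mono order_trans)
    ultimately have "(\<lambda>i. int (a i)) = (\<lambda>i. int (x i))" using m a(2) unfolding MinP_def by blast
    then have "a = x" by (simp add: fun_eq_iff)
    then show "y = x" using a(3) le by (simp add: antisym fun_eq_iff)
  qed
qed

theorem main:
  shows "(\<forall>b\<in>staircase d E r. supp_in d b \<and> (\<forall>i. 0 \<le> b i))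
    \<and> {c. supp_in d c \<and> (\<exists>b\<in>staircase d E r. \<forall>i. b i \<le> int (c i))} = int_closure_exps d E r
    \<and> (d \<le> 2 \<longrightarrow> (\<lambda>b i. nat (b i)) ` staircase d E r = min_gens (int_closure_exps d E r))"
proof (intro conjI impI)
  have nnb: "supp_in d b \<and> (\<forall>i. 0 \<le> b i)" if b: "b \<in> staircase d E r" for b
  proof -
    have ib: "inb d lo hi b" using stc_out[OF b] by simp
    have "0 \<le> b i" for i
    proof (cases "i < d")
      case True then show ?thesis using ib minV_nn[of i] unfolding inb_def by (meson order_trans)
    next
      case False then show ?thesis using ib unfolding inb_def supp_in_def by simp
    qed
    then show ?thesis using ib unfolding inb_def by simp
  qed
  then show "\<forall>b\<in>staircase d E r. supp_in d b \<and> (\<forall>i. 0 \<le> b i)" by blast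
  show "{c. supp_in d c \<and> (\<exists>b\<in>staircase d E r. \<forall>i. b i \<le> int (c i))} = int_closure_exps d E r"
  proof (intro equalityI subsetI)
    fix c assume "c \<in> {c. supp_in d c \<and> (\<exists>b\<in>staircase d E r. \<forall>i. b i \<le> int (c i))}"
    then obtain b where sc: "supp_in d c" and b: "b \<in> staircase d E r" and le: "\<forall>i. b i \<le> int (c i)" by auto
    have Pb: "P b" using stc_out[OF b] by simp
    have nb: "supp_in d b" "\<forall>i. 0 \<le> b i" using nnb[OF b] by auto
    have be: "(\<lambda>i. int (nat (b i))) = b" using nb(2) by (simp add: fun_eq_iff)
    show "c \<in> int_closure_exps d E r"
      unfolding IC_mem
    proof (intro conjI exI[of _ "\<lambda>i. nat (b i)"] sc)
      show "supp_in d (\<lambda>i. nat (b i))" using nb(1) by (simp add: supp_in_def)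
      show "P (\<lambda>i. int (nat (b i)))" using be Pb by simp
      show "\<forall>i. nat (b i) \<le> c i" using le by (simp add: nat_le_iff)
    qed
  next
    fix c assume "c \<in> int_closure_exps d E r"
    then obtain a where sc: "supp_in d c" and a: "supp_in d a" "P (\<lambda>i. int (a i))" "\<forall>i. a i \<le> c i"
      unfolding IC_mem by blast
    obtain c0 where c0: "MinP c0" "\<forall>i. c0 i \<le> int (a i)" using exists_MinP[OF a(2)] by blast
    have "c0 \<in> staircase d E r" by (rule MinP_in_stc[OF c0(1)])
    moreover have "\<forall>i. c0 i \<le> int (c i)" using c0(2) a(3) by (meson of_nat_mono order_trans)
    ultimately show "c \<in> {c. supp_in d c \<and> (\<exists>b\<in>staircase d E r. \<forall>i. b i \<le> int (c i))}" using sc by blast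
  qed
  assume d2: "d \<le> 2"
  show "(\<lambda>b i. nat (b i)) ` staircase d E r = min_gens (int_closure_exps d E r)"
  proof (intro equalityI subsetI)
    fix x assume "x \<in> (\<lambda>b i. nat (b i)) ` staircase d E r"
    then obtain b where b: "b \<in> staircase d E r" and xb: "x = (\<lambda>i. nat (b i))" by blast
    have "(\<lambda>i. int (x i)) = b" using nnb[OF b] xb by (simp add: fun_eq_iff)
    then show "x \<in> min_gens (int_closure_exps d E r)" unfolding min_gens_IC using stc_MinP2[OF d2 b] by simp
  next
    fix x assume "x \<in> min_gens (int_closure_exps d E r)"
    then have m: "MinP (\<lambda>i. int (x i))" unfolding min_gens_IC .
    have "(\<lambda>i. int (x i)) \<in> staircase d E r" by (rule MinP_in_stc[OF m])
    then show "x \<in> (\<lambda>b i. nat (b i)) ` staircase d E r"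
      by (intro image_eqI[where f="\<lambda>b i. nat (b i)" and x="\<lambda>i. int (x i)"]) simp_all
  qed
qed

end


theorem proposition4p9:
  fixes d :: nat and E :: "(nat \<Rightarrow> nat) set" and r :: real
  assumes "d \<ge> 1"
    and "monomial_ideal_exps d E"
    and "E \<noteq> {}"
    and "r \<ge> 0"
  shows "(\<forall>b\<in>staircase d E r. supp_in d b \<and> (\<forall>i. 0 \<le> b i))
    \<and> {c. supp_in d c \<and> (\<exists>b\<in>staircase d E r. \<forall>i. b i \<le> int (c i))} = int_closure_exps d E r
    \<and> (d \<le> 2 \<longrightarrow> (\<lambda>b i. nat (b i)) ` staircase d E r = min_gens (int_closure_exps d E r))"
proof -
  interpret stc d E r using assms by unfold_locales
  show ?thesis by (rule main)
qed

end
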